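(* Let $H$ be a separable complex Hilbert space, $\{v_j\}_{j\in\mathbb N}$ an orthonormal basis of $H$, $\{w_j\}_{j\in\mathbb N}$ a set of unit vectors in $H$, and $N\ge1$. Let $p_N'$ be the orthogonal projection onto $H_N'=\operatorname{span}\{v_1,\dots,v_N\}$, let $\mathcal B_N=\{w_j\}_{1\le j\le N}\cup\{v_j\}_{j\ge N+1}$ and $\tilde{\mathcal B}_N=\{p_N'(w_1),\dots,p_N'(w_N)\}\cup\{v_j\}_{j\ge N+1}$. Then $\mathcal B_N$ is a Riesz basis of $H$ if and only if $\tilde{\mathcal B}_N$ is a Riesz basis of $H$.
   Context: A Riesz basis is a sequence $\{u_j\}$ such that there are $0<A\le B<\infty$ with $A\|f\|^2\le\sum_j|\langle f,u_j\rangle|^2\le B\|f\|^2$ for all $f\in H$ and $A\sum|a_j|^2\le\|\sum a_ju_j\|^2\le B\sum|a_j|^2$ for all finite coefficient sequences. *)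

theory Defs
  imports "HOL-Analysis.Analysis"
begin

class complex_vector = real_vector +
  fixes scaleC :: "complex \<Rightarrow> 'a \<Rightarrow> 'a" (infixr "*\<^sub>C" 75)
  assumes scaleC_add_right: "a *\<^sub>C (x + y) = a *\<^sub>C x + a *\<^sub>C y"
    and scaleC_add_left: "(a + b) *\<^sub>C x = a *\<^sub>C x + b *\<^sub>C x"
    and scaleC_scaleC: "a *\<^sub>C (b *\<^sub>C x) = (a * b) *\<^sub>C x"
    and scaleC_one: "1 *\<^sub>C x = x"
    and scaleR_scaleC: "scaleR r x = complex_of_real r *\<^sub>C x"

class complex_inner = complex_vector + real_normed_vector +
  fixes cinner :: "'a \<Rightarrow> 'a \<Rightarrow> complex"
  assumes cinner_conj: "cinner x y = cnj (cinner y x)"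
    and cinner_add_right: "cinner x (y + z) = cinner x y + cinner x z"
    and cinner_scaleC_right: "cinner x (a *\<^sub>C y) = a * cinner x y"
    and cinner_ge_zero: "0 \<le> Re (cinner x x)"
    and cinner_eq_zero_iff: "cinner x x = 0 \<longleftrightarrow> x = 0"
    and norm_eq_sqrt_cinner: "norm x = sqrt (Re (cinner x x))"

class chilbert_space = complex_inner + complete_space

definition cspan :: "'a::complex_vector set \<Rightarrow> 'a set" where
  "cspan S = {\<Sum>x\<in>F. c x *\<^sub>C x | F c. finite F \<and> F \<subseteq> S}"

definition orthonormal_basis :: "(nat \<Rightarrow> 'a::complex_inner) \<Rightarrow> bool" where
  "orthonormal_basis v \<longleftrightarrow>
     (\<forall>i j. cinner (v i) (v j) = (if i = j then 1 else 0)) \<and>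
     closure (cspan (range v)) = UNIV"

definition orth_proj :: "'a::complex_inner set \<Rightarrow> 'a \<Rightarrow> 'a" where
  "orth_proj M x = (THE y. y \<in> M \<and> (\<forall>z\<in>M. cinner z (x - y) = 0))"

definition riesz_basis :: "(nat \<Rightarrow> 'a::complex_inner) \<Rightarrow> bool" where
  "riesz_basis u \<longleftrightarrow> (\<exists>A B. 0 < A \<and> A \<le> B \<and>
     (\<forall>f. summable (\<lambda>j. (cmod (cinner f (u j)))\<^sup>2) \<and>
          A * (norm f)\<^sup>2 \<le> (\<Sum>j. (cmod (cinner f (u j)))\<^sup>2) \<and>
          (\<Sum>j. (cmod (cinner f (u j)))\<^sup>2) \<le> B * (norm f)\<^sup>2) \<and>
     (\<forall>F a. finite F \<longrightarrow>
          A * (\<Sum>j\<in>F. (cmod (a j))\<^sup>2) \<le> (norm (\<Sum>j\<in>F. a j *\<^sub>C u j))\<^sup>2 \<and>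
          (norm (\<Sum>j\<in>F. a j *\<^sub>C u j))\<^sup>2 \<le> B * (\<Sum>j\<in>F. (cmod (a j))\<^sup>2)))"

end

theory Submission
  imports Defs "Jordan_Normal_Form.Determinant"
begin

lemma scaleC_zero_left [simp]: "(0::complex) *\<^sub>C x = (0::'a::complex_vector)"
proof -
  have "(0::complex) *\<^sub>C x = (0 + 0) *\<^sub>C x" by simp
  also have "\<dots> = 0 *\<^sub>C x + 0 *\<^sub>C x" by (rule scaleC_add_left)
  finally have "0 *\<^sub>C x = 0 *\<^sub>C x + (0::complex) *\<^sub>C x" .
  thus ?thesis by (metis add_cancel_right_right)
qed

lemma scaleC_zero_right [simp]: "a *\<^sub>C (0::'a::complex_vector) = 0"
proof -
  have "a *\<^sub>C (0::'a) = a *\<^sub>C (0 + 0)" by simp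
  also have "\<dots> = a *\<^sub>C 0 + a *\<^sub>C 0" by (rule scaleC_add_right)
  finally have "a *\<^sub>C (0::'a) = a *\<^sub>C 0 + a *\<^sub>C 0" .
  thus ?thesis by (metis add_cancel_right_right)
qed

lemma scaleC_minus_right: "a *\<^sub>C (- x) = - (a *\<^sub>C (x::'a::complex_vector))"
proof -
  have "a *\<^sub>C (- x) + a *\<^sub>C x = 0" by (simp flip: scaleC_add_right)
  thus ?thesis by (simp add: eq_neg_iff_add_eq_0)
qed

lemma scaleC_diff_right: "a *\<^sub>C (x - y) = a *\<^sub>C x - a *\<^sub>C (y::'a::complex_vector)"
  by (simp only: diff_conv_add_uminus scaleC_add_right scaleC_minus_right)

lemma scaleC_minus_left: "(- a) *\<^sub>C x = - (a *\<^sub>C (x::'a::complex_vector))"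
proof -
  have "(- a) *\<^sub>C x + a *\<^sub>C x = 0" by (simp flip: scaleC_add_left)
  thus ?thesis by (simp add: eq_neg_iff_add_eq_0)
qed

lemma scaleC_sum_right: "a *\<^sub>C (\<Sum>i\<in>F. f i) = (\<Sum>i\<in>F. a *\<^sub>C (f i::'a::complex_vector))"
  by (induction F rule: infinite_finite_induct) (auto simp: scaleC_add_right)

lemma scaleC_sum_left: "(\<Sum>i\<in>F. c i) *\<^sub>C x = (\<Sum>i\<in>F. c i *\<^sub>C (x::'a::complex_vector))"
  by (induction F rule: infinite_finite_induct) (auto simp: scaleC_add_left)

lemma cinner_add_left: "cinner (x + y) z = cinner x z + cinner y (z::'a::complex_inner)"
  by (metis cinner_conj cinner_add_right complex_cnj_add)

lemma cinner_scaleC_left: "cinner (a *\<^sub>C x) y = cnj a * cinner x (y::'a::complex_inner)"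
  by (metis cinner_conj cinner_scaleC_right complex_cnj_mult)

lemma cinner_zero_right [simp]: "cinner x (0::'a::complex_inner) = 0"
  using cinner_scaleC_right[of x 0 0] by simp

lemma cinner_zero_left [simp]: "cinner (0::'a::complex_inner) x = 0"
  using cinner_scaleC_left[of 0 0 x] by simp

lemma cinner_minus_right: "cinner x (- y) = - cinner x (y::'a::complex_inner)"
  using cinner_add_right[of x y "-y"] by (simp add: add_eq_0_iff)

lemma cinner_minus_left: "cinner (- x) y = - cinner x (y::'a::complex_inner)"
  using cinner_add_left[of x "-x" y] by (simp add: add_eq_0_iff)

lemma cinner_diff_right: "cinner x (y - z) = cinner x y - cinner x (z::'a::complex_inner)"
  by (simp only: diff_conv_add_uminus cinner_add_right cinner_minus_right)

lemma cinner_diff_left: "cinner (x - y) z = cinner x z - cinner y (z::'a::complex_inner)"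
  by (simp only: diff_conv_add_uminus cinner_add_left cinner_minus_left)

lemma cinner_sum_right: "cinner x (\<Sum>i\<in>F. f i) = (\<Sum>i\<in>F. cinner x (f i::'a::complex_inner))"
  by (induction F rule: infinite_finite_induct) (auto simp: cinner_add_right)

lemma cinner_sum_left: "cinner (\<Sum>i\<in>F. f i) x = (\<Sum>i\<in>F. cinner (f i::'a::complex_inner) x)"
  by (induction F rule: infinite_finite_induct) (auto simp: cinner_add_left)

lemma cinner_self: "cinner x x = complex_of_real ((norm (x::'a::complex_inner))\<^sup>2)"
proof -
  have "Im (cinner x x) = - Im (cinner x x)" using arg_cong[OF cinner_conj[of x x], of Im] by simp
  hence "Im (cinner x x) = 0" by linarith
  moreover have "(norm x)\<^sup>2 = Re (cinner x x)"
    using norm_eq_sqrt_cinner[of x] cinner_ge_zero[of x] by simp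
  ultimately show ?thesis by (simp add: complex_eq_iff)
qed

lemma norm_sq_cinner: "(norm x)\<^sup>2 = Re (cinner x (x::'a::complex_inner))"
  by (simp add: cinner_self)

lemma norm_add_sq: "(norm (x + y))\<^sup>2 = (norm x)\<^sup>2 + (norm y)\<^sup>2 + 2 * Re (cinner x (y::'a::complex_inner))"
proof -
  have "cinner y x = cnj (cinner x y)" by (rule cinner_conj)
  hence "Re (cinner y x) = Re (cinner x y)" by simp
  thus ?thesis by (simp add: norm_sq_cinner cinner_add_left cinner_add_right)
qed

lemma cnj_mult_self: "cnj a * a = complex_of_real ((cmod a)\<^sup>2)"
  using complex_norm_square[of a] by (simp add: mult.commute)

lemma norm_scaleC: "norm (a *\<^sub>C x) = cmod a * norm (x::'a::complex_inner)"
proof -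
  have "cinner (a *\<^sub>C x) (a *\<^sub>C x) = (cnj a * a) * cinner x x"
    by (simp add: cinner_scaleC_left cinner_scaleC_right mult.assoc)
  also have "cnj a * a = complex_of_real ((cmod a)\<^sup>2)"
    using complex_norm_square[of a] by (simp add: mult.commute)
  finally have "complex_of_real ((norm (a *\<^sub>C x))\<^sup>2) = complex_of_real ((cmod a)\<^sup>2 * (norm x)\<^sup>2)"
    unfolding cinner_self by simp
  hence "(norm (a *\<^sub>C x))\<^sup>2 = (cmod a * norm x)\<^sup>2"
    unfolding of_real_eq_iff by (simp add: power_mult_distrib)
  thus ?thesis by (simp add: power2_eq_iff_nonneg)
qed

lemma cauchy_schwarz: "cmod (cinner x y) \<le> norm x * norm (y::'a::complex_inner)"
proof (cases "y = 0")
  case True thus ?thesis by simp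
next
  case False
  hence ny: "norm y > 0" by simp
  define t where "t = cinner y x / complex_of_real ((norm y)\<^sup>2)"
  define z where "z = x - t *\<^sub>C y"
  have yz: "cinner y z = 0"
    using ny by (simp add: z_def t_def cinner_diff_right cinner_scaleC_right cinner_self)
  have x: "x = z + t *\<^sub>C y" by (simp add: z_def)
  have "(norm x)\<^sup>2 = (norm z)\<^sup>2 + (norm (t *\<^sub>C y))\<^sup>2"
    unfolding x norm_add_sq using yz cinner_conj[of z y]
    by (simp add: cinner_scaleC_right)
  hence A: "(norm x)\<^sup>2 \<ge> (cmod t * norm y)\<^sup>2" by (simp add: norm_scaleC)
  have "cmod t = cmod (cinner y x) / (norm y)\<^sup>2"
    unfolding t_def norm_divide norm_of_real by simp
  hence B: "cmod t * norm y = cmod (cinner y x) / norm y"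
    using ny by (simp add: power2_eq_square)
  have C: "cmod (cinner y x) = cmod (cinner x y)"
    by (metis cinner_conj complex_mod_cnj)
  from A B C have "(cmod (cinner x y) / norm y)\<^sup>2 \<le> (norm x)\<^sup>2" by simp
  hence "cmod (cinner x y) / norm y \<le> norm x"
    using power2_le_imp_le by fastforce
  thus ?thesis using ny by (simp add: divide_le_eq mult.commute)
qed

definition ON :: "(nat \<Rightarrow> 'a::complex_inner) \<Rightarrow> bool" where
  "ON v \<longleftrightarrow> (\<forall>i j. cinner (v i) (v j) = (if i = j then 1 else 0))"

definition proj :: "(nat \<Rightarrow> 'a::complex_inner) \<Rightarrow> nat set \<Rightarrow> 'a \<Rightarrow> 'a" where
  "proj v I x = (\<Sum>k\<in>I. cinner (v k) x *\<^sub>C v k)"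

lemma ON_inj: "ON v \<Longrightarrow> inj v"
  unfolding ON_def inj_def by (metis zero_neq_one)

lemma cinner_v_comb:
  assumes "ON v" "finite F"
  shows "cinner (v k) (\<Sum>j\<in>F. c j *\<^sub>C v j) = (if k \<in> F then c k else 0)"
proof -
  have "cinner (v k) (\<Sum>j\<in>F. c j *\<^sub>C v j) = (\<Sum>j\<in>F. c j * (if k = j then 1 else 0))"
    using assms(1) unfolding ON_def by (simp add: cinner_sum_right cinner_scaleC_right)
  also have "\<dots> = (\<Sum>j\<in>F. if k = j then c j else 0)"
    by (rule sum.cong) auto
  also have "\<dots> = (if k \<in> F then c k else 0)"
    using assms(2) by (simp add: sum.delta)
  finally show ?thesis .
qed

lemma orth_comb:
  assumes "\<forall>k\<in>I. cinner (v k) y = 0"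
  shows "cinner y (\<Sum>k\<in>I. c k *\<^sub>C v k) = 0"
proof -
  have "\<forall>k\<in>I. cinner y (v k) = 0" using assms by (metis cinner_conj complex_cnj_zero)
  thus ?thesis by (simp add: cinner_sum_right cinner_scaleC_right)
qed

lemma norm_comb_sq:
  assumes "ON v" "finite F"
  shows "(norm (\<Sum>j\<in>F. c j *\<^sub>C v j))\<^sup>2 = (\<Sum>j\<in>F. (cmod (c j))\<^sup>2)"
proof -
  let ?s = "\<Sum>j\<in>F. c j *\<^sub>C v j"
  have "cinner ?s ?s = (\<Sum>j\<in>F. cnj (c j) * cinner (v j) ?s)"
    by (simp add: cinner_sum_left cinner_scaleC_left)
  also have "\<dots> = (\<Sum>j\<in>F. complex_of_real ((cmod (c j))\<^sup>2))"
    using assms by (intro sum.cong) (auto simp: cinner_v_comb cnj_mult_self)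
  finally have "Re (cinner ?s ?s) = (\<Sum>j\<in>F. (cmod (c j))\<^sup>2)"
    by (simp add: Re_sum)
  thus ?thesis by (simp add: norm_sq_cinner)
qed

lemma resid_orth:
  assumes "ON v" "finite I" "k \<in> I"
  shows "cinner (v k) (x - proj v I x) = 0"
  using assms cinner_v_comb[OF assms(1,2), of k "\<lambda>k. cinner (v k) x"]
  by (simp add: proj_def cinner_diff_right)

lemma norm_resid:
  assumes "ON v" "finite I"
  shows "(norm (x - proj v I x))\<^sup>2 = (norm x)\<^sup>2 - (\<Sum>k\<in>I. (cmod (cinner (v k) x))\<^sup>2)"
proof -
  let ?p = "proj v I x"
  have o: "cinner (x - ?p) ?p = 0"
    unfolding proj_def by (rule orth_comb) (use resid_orth[OF assms] in \<open>auto simp: proj_def\<close>)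
  have "(norm ((x - ?p) + ?p))\<^sup>2 = (norm (x - ?p))\<^sup>2 + (norm ?p)\<^sup>2 + 2 * Re (cinner (x - ?p) ?p)"
    by (rule norm_add_sq)
  hence "(norm x)\<^sup>2 = (norm (x - ?p))\<^sup>2 + (norm ?p)\<^sup>2" using o by simp
  moreover have "(norm ?p)\<^sup>2 = (\<Sum>k\<in>I. (cmod (cinner (v k) x))\<^sup>2)"
    unfolding proj_def by (rule norm_comb_sq[OF assms])
  ultimately show ?thesis by simp
qed

lemma bessel:
  assumes "ON v" "finite I"
  shows "(\<Sum>k\<in>I. (cmod (cinner (v k) x))\<^sup>2) \<le> (norm x)\<^sup>2"
proof -
  have "0 \<le> (norm (x - proj v I x))\<^sup>2" by simp
  thus ?thesis using norm_resid[OF assms, of x] by linarith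
qed

lemma onb_ON: "orthonormal_basis v \<Longrightarrow> ON v"
  unfolding orthonormal_basis_def ON_def by blast

lemma approx:
  assumes onb: "orthonormal_basis v" and e: "e > 0"
  shows "\<exists>K0. \<forall>K\<ge>K0. norm (x - proj v {..<K} x) < e"
proof -
  have ON: "ON v" using onb by (rule onb_ON)
  have "x \<in> closure (cspan (range v))" using onb unfolding orthonormal_basis_def by simp
  then obtain y where y: "y \<in> cspan (range v)" and dy: "dist y x < e"
    using e unfolding closure_approachable by blast
  then obtain F c where F: "finite F" "F \<subseteq> range v" and yF: "y = (\<Sum>z\<in>F. c z *\<^sub>C z)"
    unfolding cspan_def by blast
  obtain I where I: "F = v ` I" "finite I"
    using finite_subset_image[OF F] by blast
  obtain K0 where K0: "I \<subseteq> {..<K0}" using finite_nat_bounded[OF I(2)] by blast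
  show ?thesis
  proof (intro exI allI impI)
    fix K assume K: "K0 \<le> K"
    let ?p = "proj v {..<K} x"
    let ?r = "x - ?p"
    have rv: "cinner ?r z = 0" if "z \<in> F" for z
    proof -
      obtain k where k: "k \<in> I" "z = v k" using \<open>z \<in> F\<close> I by blast
      have "k \<in> {..<K}" using k K0 K by auto
      hence "cinner (v k) ?r = 0" using resid_orth[OF ON] by simp
      thus ?thesis using k by (metis cinner_conj complex_cnj_zero)
    qed
    have ry: "cinner ?r y = 0" unfolding yF using rv
      by (simp add: cinner_sum_right cinner_scaleC_right)
    have rp: "cinner ?r ?p = 0"
      unfolding proj_def by (rule orth_comb) (use resid_orth[OF ON] in \<open>auto simp: proj_def\<close>)
    have "(norm (?r + (?p - y)))\<^sup>2 = (norm ?r)\<^sup>2 + (norm (?p - y))\<^sup>2 + 2 * Re (cinner ?r (?p - y))"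
      by (rule norm_add_sq)
    moreover have "cinner ?r (?p - y) = 0" using ry rp by (simp add: cinner_diff_right)
    moreover have "?r + (?p - y) = x - y" by simp
    ultimately have "(norm (x - y))\<^sup>2 = (norm ?r)\<^sup>2 + (norm (?p - y))\<^sup>2" by simp
    hence "(norm ?r)\<^sup>2 \<le> (norm (x - y))\<^sup>2" by simp
    hence "norm ?r \<le> norm (x - y)"
      by (rule power2_le_imp_le) simp
    also have "norm (x - y) < e" using dy by (simp add: dist_norm norm_minus_commute)
    finally show "norm ?r < e" .
  qed
qed

lemma parseval:
  assumes onb: "orthonormal_basis v"
  shows "(\<lambda>k. (cmod (cinner (v k) x))\<^sup>2) sums (norm x)\<^sup>2"
  unfolding sums_def
proof (rule LIMSEQ_I)
  fix r :: real assume r: "0 < r"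
  have ON: "ON v" using onb by (rule onb_ON)
  obtain K0 where K0: "\<forall>K\<ge>K0. norm (x - proj v {..<K} x) < sqrt r"
    using approx[OF onb, of "sqrt r" x] r by auto
  show "\<exists>no. \<forall>n\<ge>no. norm ((\<Sum>k<n. (cmod (cinner (v k) x))\<^sup>2) - (norm x)\<^sup>2) < r"
  proof (intro exI allI impI)
    fix n assume "K0 \<le> n"
    hence "norm (x - proj v {..<n} x) < sqrt r" using K0 by blast
    hence "(norm (x - proj v {..<n} x))\<^sup>2 < (sqrt r)\<^sup>2"
      by (rule power_strict_mono) simp_all
    hence "(norm (x - proj v {..<n} x))\<^sup>2 < r" using r by simp
    hence "(norm x)\<^sup>2 - (\<Sum>k<n. (cmod (cinner (v k) x))\<^sup>2) < r"
      using norm_resid[OF ON, of "{..<n}" x] by simp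
    moreover have "(\<Sum>k<n. (cmod (cinner (v k) x))\<^sup>2) \<le> (norm x)\<^sup>2"
      using bessel[OF ON] by simp
    ultimately show "norm ((\<Sum>k<n. (cmod (cinner (v k) x))\<^sup>2) - (norm x)\<^sup>2) < r"
      by simp
  qed
qed

lemma orth_proj_eq:
  assumes ON: "ON v"
  shows "orth_proj (cspan (v ` {..<N})) x = proj v {..<N} x"
proof -
  let ?M = "cspan (v ` {..<N})"
  let ?p = "proj v {..<N} x"
  have inj: "inj_on v {..<N}" using ON_inj[OF ON] inj_on_subset by blast
  have pM: "?p \<in> ?M"
  proof -
    have "(\<Sum>z\<in>v ` {..<N}. cinner z x *\<^sub>C z) = ?p"
      unfolding proj_def sum.reindex[OF inj] by (simp add: o_def)
    hence "\<exists>F c. ?p = (\<Sum>z\<in>F. c z *\<^sub>C z) \<and> finite F \<and> F \<subseteq> v ` {..<N}"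
      by (metis finite_imageI finite_lessThan order_refl)
    thus ?thesis unfolding cspan_def by simp
  qed
  have orthM: "cinner z (x - ?p) = 0" if "z \<in> ?M" for z
  proof -
    obtain F c where F: "finite F" "F \<subseteq> v ` {..<N}" and z: "z = (\<Sum>w\<in>F. c w *\<^sub>C w)"
      using \<open>z \<in> ?M\<close> unfolding cspan_def by blast
    have w0: "cinner w (x - ?p) = 0" if "w \<in> F" for w
    proof -
      obtain k where k: "k < N" "w = v k" using F(2) \<open>w \<in> F\<close> by blast
      show ?thesis using resid_orth[OF ON, of "{..<N}" k x] k by simp
    qed
    have "cinner z (x - ?p) = (\<Sum>w\<in>F. cnj (c w) * cinner w (x - ?p))"
      unfolding z by (simp add: cinner_sum_left cinner_scaleC_left)
    also have "\<dots> = 0" using w0 by simp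
    finally show ?thesis .
  qed
  show ?thesis unfolding orth_proj_def
  proof (rule the_equality)
    show "?p \<in> ?M \<and> (\<forall>z\<in>?M. cinner z (x - ?p) = 0)" using pM orthM by blast
  next
    fix y assume y: "y \<in> ?M \<and> (\<forall>z\<in>?M. cinner z (x - y) = 0)"
    have eq: "(x - y) - (x - ?p) = ?p - y" by simp
    have d: "cinner z (?p - y) = 0" if "z \<in> ?M" for z
    proof -
      have "cinner z ((x - y) - (x - ?p)) = cinner z (x - y) - cinner z (x - ?p)"
        by (rule cinner_diff_right)
      also have "\<dots> = 0" using y orthM[OF that] that by simp
      finally show ?thesis unfolding eq .
    qed
    have "cinner (?p - y) (?p - y) = cinner ?p (?p - y) - cinner y (?p - y)"
      by (rule cinner_diff_left)
    also have "\<dots> = 0" using d[OF pM] d[of y] y by simp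
    finally have "?p - y = 0" using cinner_eq_zero_iff by blast
    thus "y = ?p" by simp
  qed
qed

lemma inv_exists:
  fixes G :: "nat \<Rightarrow> nat \<Rightarrow> complex"
  assumes inj: "\<And>a. \<forall>k<N. (\<Sum>j<N. G k j * a j) = 0 \<Longrightarrow> \<forall>j<N. a j = 0"
  shows "\<exists>Gi. (\<forall>i<N. \<forall>j<N. (\<Sum>k<N. Gi i k * G k j) = (if i = j then 1 else 0)) \<and>
              (\<forall>i<N. \<forall>j<N. (\<Sum>k<N. G i k * Gi k j) = (if i = j then 1 else 0))"
proof -
  define A where "A = mat N N (\<lambda>(i,j). G i j)"
  have A: "A \<in> carrier_mat N N" by (simp add: A_def)
  have "det A \<noteq> 0"
  proof
    assume "det A = 0"
    then obtain w where w: "w \<in> carrier_vec N" "w \<noteq> 0\<^sub>v N" "A *\<^sub>v w = 0\<^sub>v N"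
      using det_0_iff_vec_prod_zero_field[OF A] by blast
    have "\<forall>k<N. (\<Sum>j<N. G k j * (w $ j)) = 0"
    proof (intro allI impI)
      fix k assume k: "k < N"
      have "(A *\<^sub>v w) $ k = 0" using w(3) k by simp
      thus "(\<Sum>j<N. G k j * w $ j) = 0" using k w(1)
        by (simp add: A_def scalar_prod_def lessThan_atLeast0 row_def)
    qed
    hence "\<forall>j<N. w $ j = 0" by (rule inj)
    hence "w = 0\<^sub>v N" using w(1) by (intro eq_vecI) auto
    with w(2) show False by simp
  qed
  from det_non_zero_imp_unit[OF A this, of "()"]
  obtain B where B: "B \<in> carrier_mat N N" "B * A = 1\<^sub>m N" "A * B = 1\<^sub>m N"
    unfolding Units_def ring_mat_def by auto
  show ?thesis
  proof (intro exI[of _ "\<lambda>i k. B $$ (i,k)"] conjI allI impI)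
    fix i j assume ij: "i < N" "j < N"
    have "(B * A) $$ (i,j) = (if i = j then 1 else 0)" using B(2) ij by simp
    thus "(\<Sum>k<N. B $$ (i,k) * G k j) = (if i = j then 1 else 0)"
      using ij B(1) A by (simp add: A_def scalar_prod_def lessThan_atLeast0 row_def col_def)
  next
    fix i j assume ij: "i < N" "j < N"
    have "(A * B) $$ (i,j) = (if i = j then 1 else 0)" using B(3) ij by simp
    thus "(\<Sum>k<N. G i k * B $$ (k,j)) = (if i = j then 1 else 0)"
      using ij B(1) A by (simp add: A_def scalar_prod_def lessThan_atLeast0 row_def col_def)
  qed
qed

lemma sq_sum_le: "((a::real) + b)\<^sup>2 \<le> 2 * a\<^sup>2 + 2 * b\<^sup>2"
proof -
  have "0 \<le> (a - b)\<^sup>2" by simp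
  thus ?thesis by (simp add: power2_sum power2_diff)
qed

lemma cs_complex:
  "(cmod (\<Sum>k\<in>F. a k * b k))\<^sup>2 \<le> (\<Sum>k\<in>F. (cmod (a k))\<^sup>2) * (\<Sum>k\<in>F. (cmod (b k))\<^sup>2)"
proof -
  have "cmod (\<Sum>k\<in>F. a k * b k) \<le> (\<Sum>k\<in>F. cmod (a k) * cmod (b k))"
    by (metis (no_types, lifting) norm_mult norm_sum sum.cong)
  hence "(cmod (\<Sum>k\<in>F. a k * b k))\<^sup>2 \<le> (\<Sum>k\<in>F. cmod (a k) * cmod (b k))\<^sup>2"
    by (simp add: power_mono)
  also have "\<dots> \<le> (\<Sum>k\<in>F. (cmod (a k))\<^sup>2) * (\<Sum>k\<in>F. (cmod (b k))\<^sup>2)"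
    by (rule Cauchy_Schwarz_ineq_sum)
  finally show ?thesis .
qed

lemma recover:
  assumes "\<forall>i<N. a i = (\<Sum>k<N. M i k * y k)"
  shows "(\<Sum>i<N. (cmod (a i))\<^sup>2) \<le> (\<Sum>i<N. \<Sum>k<N. (cmod (M i k))\<^sup>2) * (\<Sum>k<N. (cmod (y k))\<^sup>2)"
proof -
  have "(\<Sum>i<N. (cmod (a i))\<^sup>2) \<le> (\<Sum>i<N. (\<Sum>k<N. (cmod (M i k))\<^sup>2) * (\<Sum>k<N. (cmod (y k))\<^sup>2))"
    using assms by (intro sum_mono) (simp add: cs_complex)
  also have "\<dots> = (\<Sum>i<N. \<Sum>k<N. (cmod (M i k))\<^sup>2) * (\<Sum>k<N. (cmod (y k))\<^sup>2)"
    by (simp add: sum_distrib_right)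
  finally show ?thesis .
qed

lemma inv_apply:
  fixes G Gi :: "nat \<Rightarrow> nat \<Rightarrow> complex"
  assumes inv: "\<forall>i<N. \<forall>j<N. (\<Sum>k<N. Gi i k * G k j) = (if i = j then 1 else 0)"
    and y: "\<forall>k<N. y k = (\<Sum>j<N. G k j * a j)"
  shows "\<forall>i<N. a i = (\<Sum>k<N. Gi i k * y k)"
proof (intro allI impI)
  fix i assume i: "i < N"
  have "(\<Sum>k<N. Gi i k * y k) = (\<Sum>k<N. \<Sum>j<N. Gi i k * G k j * a j)"
    using y by (simp add: sum_distrib_left mult.assoc)
  also have "\<dots> = (\<Sum>j<N. \<Sum>k<N. Gi i k * G k j * a j)"
    by (rule sum.swap)
  also have "\<dots> = (\<Sum>j<N. (\<Sum>k<N. Gi i k * G k j) * a j)"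
    by (simp add: sum_distrib_right)
  also have "\<dots> = (\<Sum>j<N. if i = j then a j else 0)"
    using inv i by (intro sum.cong) auto
  also have "\<dots> = a i" using i by (simp add: sum.delta)
  finally show "a i = (\<Sum>k<N. Gi i k * y k)" by simp
qed

lemma inv_apply2:
  fixes G Gi :: "nat \<Rightarrow> nat \<Rightarrow> complex"
  assumes inv: "\<forall>i<N. \<forall>j<N. (\<Sum>k<N. G i k * Gi k j) = (if i = j then 1 else 0)"
    and d: "\<forall>j<N. d j = (\<Sum>k<N. cc k * G k j)"
  shows "\<forall>i<N. cc i = (\<Sum>j<N. Gi j i * d j)"
proof (intro allI impI)
  fix i assume i: "i < N"
  have "(\<Sum>j<N. Gi j i * d j) = (\<Sum>j<N. \<Sum>k<N. cc k * (G k j * Gi j i))"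
    using d by (simp add: sum_distrib_left sum_distrib_right mult.commute mult.left_commute)
  also have "\<dots> = (\<Sum>k<N. \<Sum>j<N. cc k * (G k j * Gi j i))"
    by (rule sum.swap)
  also have "\<dots> = (\<Sum>k<N. cc k * (\<Sum>j<N. G k j * Gi j i))"
    by (simp add: sum_distrib_left)
  also have "\<dots> = (\<Sum>k<N. if k = i then cc k else 0)"
    using inv i by (intro sum.cong) auto
  also have "\<dots> = cc i" using i by (simp add: sum.delta')
  finally show "cc i = (\<Sum>j<N. Gi j i * d j)" by simp
qed

lemma riesz_inj:
  assumes onb: "orthonormal_basis v"
    and R: "riesz_basis (\<lambda>j. if j < N then x j else v j)"
  shows "\<forall>a. (\<forall>k<N. (\<Sum>j<N. cinner (v k) (x j) * a j) = 0) \<longrightarrow> (\<forall>j<N. a j = 0)"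
proof (rule allI, rule impI)
  fix a :: "nat \<Rightarrow> complex"
  assume h: "\<forall>k<N. (\<Sum>j<N. cinner (v k) (x j) * a j) = 0"
  let ?u = "\<lambda>j. if j < N then x j else v j"
  have ON: "ON v" using onb by (rule onb_ON)
  obtain A where A: "A > 0" and low: "\<And>F b. finite F \<Longrightarrow>
      A * (\<Sum>j\<in>F. (cmod (b j))\<^sup>2) \<le> (norm (\<Sum>j\<in>F. b j *\<^sub>C ?u j))\<^sup>2"
    using R unfolding riesz_basis_def by blast
  define y where "y = (\<Sum>j<N. a j *\<^sub>C x j)"
  have yk: "cinner (v k) y = 0" if "k < N" for k
  proof -
    have "cinner (v k) y = (\<Sum>j<N. cinner (v k) (x j) * a j)"
      unfolding y_def by (simp add: cinner_sum_right cinner_scaleC_right mult.commute)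
    thus ?thesis using h that by simp
  qed
  define \<alpha> where "\<alpha> = (\<Sum>j<N. (cmod (a j))\<^sup>2)"
  have \<alpha>0: "\<alpha> \<ge> 0" unfolding \<alpha>_def by (simp add: sum_nonneg)
  have "\<alpha> = 0"
  proof (rule ccontr)
    assume "\<alpha> \<noteq> 0"
    hence \<alpha>p: "\<alpha> > 0" using \<alpha>0 by simp
    define e where "e = sqrt (A * \<alpha>)"
    have e: "e > 0" using A \<alpha>p by (simp add: e_def)
    obtain K0 where K0: "\<forall>K\<ge>K0. norm (y - proj v {..<K} y) < e"
      using approx[OF onb e] by blast
    define K where "K = max K0 N"
    have NK: "N \<le> K" and nr: "norm (y - proj v {..<K} y) < e"
      using K0 by (auto simp: K_def)
    define b where "b j = (if j < N then a j else - cinner (v j) y)" for j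
    have split: "{..<K} = {..<N} \<union> {N..<K}" using NK by auto
    have disj: "{..<N} \<inter> {N..<K} = {}" by auto
    have s1: "(\<Sum>j<N. b j *\<^sub>C ?u j) = y" unfolding y_def b_def by simp
    have s2: "(\<Sum>j\<in>{N..<K}. b j *\<^sub>C ?u j) = - (\<Sum>j\<in>{N..<K}. cinner (v j) y *\<^sub>C v j)"
      unfolding b_def by (simp add: sum_negf scaleC_minus_left)
    have p1: "(\<Sum>j<N. cinner (v j) y *\<^sub>C v j) = 0" using yk by simp
    have "proj v {..<K} y = (\<Sum>j<N. cinner (v j) y *\<^sub>C v j) + (\<Sum>j\<in>{N..<K}. cinner (v j) y *\<^sub>C v j)"
      unfolding proj_def split by (rule sum.union_disjoint) (auto)
    hence pK: "proj v {..<K} y = (\<Sum>j\<in>{N..<K}. cinner (v j) y *\<^sub>C v j)" using p1 by simp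
    have "(\<Sum>j<K. b j *\<^sub>C ?u j) = (\<Sum>j<N. b j *\<^sub>C ?u j) + (\<Sum>j\<in>{N..<K}. b j *\<^sub>C ?u j)"
      unfolding split by (rule sum.union_disjoint) (auto)
    hence eqr: "(\<Sum>j<K. b j *\<^sub>C ?u j) = y - proj v {..<K} y" using s1 s2 pK by simp
    have "A * (\<Sum>j<K. (cmod (b j))\<^sup>2) \<le> (norm (y - proj v {..<K} y))\<^sup>2"
      using low[of "{..<K}" b] eqr by simp
    also have "\<dots> < e\<^sup>2" using nr by (simp add: power_strict_mono)
    also have "e\<^sup>2 = A * \<alpha>" using A \<alpha>0 by (simp add: e_def)
    finally have lt: "A * (\<Sum>j<K. (cmod (b j))\<^sup>2) < A * \<alpha>" .
    have "\<alpha> = (\<Sum>j<N. (cmod (b j))\<^sup>2)" unfolding \<alpha>_def b_def by simp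
    also have "\<dots> \<le> (\<Sum>j<K. (cmod (b j))\<^sup>2)"
      using NK by (intro sum_mono2) auto
    finally have "A * \<alpha> \<le> A * (\<Sum>j<K. (cmod (b j))\<^sup>2)" using A by simp
    with lt show False by simp
  qed
  hence "\<forall>j\<in>{..<N}. (cmod (a j))\<^sup>2 = 0"
    unfolding \<alpha>_def by (subst (asm) sum_nonneg_eq_0_iff) auto
  thus "\<forall>j<N. a j = 0" by simp
qed

lemma synth_bounds:
  fixes v x :: "nat \<Rightarrow> 'a::complex_inner" and Gi :: "nat \<Rightarrow> nat \<Rightarrow> complex"
  assumes ON: "ON v"
    and inv1: "\<forall>i<N. \<forall>j<N. (\<Sum>k<N. Gi i k * cinner (v k) (x j)) = (if i = j then 1 else 0)"
    and F: "finite F"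
  defines "Kc \<equiv> (\<Sum>i<N. \<Sum>k<N. (cmod (Gi i k))\<^sup>2)"
    and "C2 \<equiv> (\<Sum>j<N. (norm (x j))\<^sup>2)"
  shows "(\<Sum>j\<in>F. (cmod (a j))\<^sup>2) \<le> (Kc + 2 + 2 * C2 * Kc) * (norm (\<Sum>j\<in>F. a j *\<^sub>C (if j < N then x j else v j)))\<^sup>2"
    and "(norm (\<Sum>j\<in>F. a j *\<^sub>C (if j < N then x j else v j)))\<^sup>2 \<le> (2 * C2 + 2) * (\<Sum>j\<in>F. (cmod (a j))\<^sup>2)"
proof -
  let ?u = "\<lambda>j. if j < N then x j else v j"
  have Kc0: "Kc \<ge> 0" and C20: "C2 \<ge> 0" by (simp_all add: Kc_def C2_def sum_nonneg)
  define F1 where "F1 = F \<inter> {..<N}"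
  define F2 where "F2 = F - {..<N}"
  have FU: "F = F1 \<union> F2" and Fd: "F1 \<inter> F2 = {}" by (auto simp: F1_def F2_def)
  have fin1: "finite F1" and fin2: "finite F2" using F by (auto simp: F1_def F2_def)
  define z where "z = (\<Sum>j\<in>F. a j *\<^sub>C ?u j)"
  define z1 where "z1 = (\<Sum>j\<in>F1. a j *\<^sub>C x j)"
  define z2 where "z2 = (\<Sum>j\<in>F2. a j *\<^sub>C v j)"
  have "z = (\<Sum>j\<in>F1. a j *\<^sub>C ?u j) + (\<Sum>j\<in>F2. a j *\<^sub>C ?u j)"
    unfolding z_def FU by (rule sum.union_disjoint[OF fin1 fin2 Fd])
  also have "(\<Sum>j\<in>F1. a j *\<^sub>C ?u j) = z1" unfolding z1_def by (rule sum.cong) (auto simp: F1_def)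
  also have "(\<Sum>j\<in>F2. a j *\<^sub>C ?u j) = z2" unfolding z2_def by (rule sum.cong) (auto simp: F2_def)
  finally have zsplit: "z = z1 + z2" .
  define \<alpha>2 where "\<alpha>2 = (\<Sum>j\<in>F1. (cmod (a j))\<^sup>2)"
  define \<beta>2 where "\<beta>2 = (\<Sum>j\<in>F2. (cmod (a j))\<^sup>2)"
  have \<alpha>0: "\<alpha>2 \<ge> 0" and \<beta>0: "\<beta>2 \<ge> 0" by (simp_all add: \<alpha>2_def \<beta>2_def sum_nonneg)
  have sumF: "(\<Sum>j\<in>F. (cmod (a j))\<^sup>2) = \<alpha>2 + \<beta>2"
    unfolding \<alpha>2_def \<beta>2_def FU by (rule sum.union_disjoint[OF fin1 fin2 Fd])
  have z2n: "(norm z2)\<^sup>2 = \<beta>2" unfolding z2_def \<beta>2_def by (rule norm_comb_sq[OF ON fin2])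
  have z1n: "(norm z1)\<^sup>2 \<le> C2 * \<alpha>2"
  proof -
    have sx: "(\<Sum>j\<in>F1. (norm (x j))\<^sup>2) \<le> C2"
      unfolding C2_def by (rule sum_mono2) (auto simp: F1_def)
    have sx2: "\<alpha>2 * (\<Sum>j\<in>F1. (norm (x j))\<^sup>2) \<le> \<alpha>2 * C2"
      using sx \<alpha>0 by (rule mult_left_mono)
    have "norm z1 \<le> (\<Sum>j\<in>F1. norm (a j *\<^sub>C x j))" unfolding z1_def by (rule norm_sum)
    also have "\<dots> = (\<Sum>j\<in>F1. cmod (a j) * norm (x j))" by (simp add: norm_scaleC)
    finally have "(norm z1)\<^sup>2 \<le> (\<Sum>j\<in>F1. cmod (a j) * norm (x j))\<^sup>2"
      by (simp add: power_mono)
    also have "\<dots> \<le> \<alpha>2 * (\<Sum>j\<in>F1. (norm (x j))\<^sup>2)"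
      unfolding \<alpha>2_def by (rule Cauchy_Schwarz_ineq_sum)
    finally show ?thesis using sx2 by (simp add: mult.commute)
  qed
  have tri: "(norm z)\<^sup>2 \<le> 2 * (norm z1)\<^sup>2 + 2 * (norm z2)\<^sup>2"
  proof -
    have "norm z \<le> norm z1 + norm z2" unfolding zsplit by (rule norm_triangle_ineq)
    hence "(norm z)\<^sup>2 \<le> (norm z1 + norm z2)\<^sup>2" by (simp add: power_mono)
    also have "\<dots> \<le> 2 * (norm z1)\<^sup>2 + 2 * (norm z2)\<^sup>2" by (rule sq_sum_le)
    finally show ?thesis .
  qed
  have "(norm z)\<^sup>2 \<le> 2 * (C2 * \<alpha>2) + 2 * \<beta>2" using tri z1n z2n by linarith
  also have "\<dots> \<le> (2 * C2 + 2) * (\<alpha>2 + \<beta>2)"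
    using C20 \<alpha>0 \<beta>0 by (simp add: algebra_simps)
  finally show "(norm (\<Sum>j\<in>F. a j *\<^sub>C ?u j))\<^sup>2 \<le> (2 * C2 + 2) * (\<Sum>j\<in>F. (cmod (a j))\<^sup>2)"
    unfolding sumF z_def .
  define a' where "a' j = (if j \<in> F then a j else 0)" for j
  define y where "y k = cinner (v k) z" for k
  have yk: "\<forall>k<N. y k = (\<Sum>j<N. cinner (v k) (x j) * a' j)"
  proof (intro allI impI)
    fix k assume k: "k < N"
    have c2: "cinner (v k) z2 = 0"
      unfolding z2_def using cinner_v_comb[OF ON fin2, of k a] k by (simp add: F2_def)
    have c1: "cinner (v k) z1 = (\<Sum>j\<in>F1. cinner (v k) (x j) * a j)"
      unfolding z1_def by (simp add: cinner_sum_right cinner_scaleC_right mult.commute)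
    have "(\<Sum>j<N. cinner (v k) (x j) * a' j) = (\<Sum>j<N. if j \<in> F then cinner (v k) (x j) * a j else 0)"
      by (rule sum.cong) (auto simp: a'_def)
    also have "\<dots> = (\<Sum>j\<in>{..<N} \<inter> F. cinner (v k) (x j) * a j)"
      by (rule sum.inter_restrict[symmetric]) simp
    also have "{..<N} \<inter> F = F1" by (auto simp: F1_def)
    finally show "y k = (\<Sum>j<N. cinner (v k) (x j) * a' j)"
      unfolding y_def zsplit cinner_add_right c1 c2 by simp
  qed
  have arec: "\<forall>i<N. a' i = (\<Sum>k<N. Gi i k * y k)"
    by (rule inv_apply[OF inv1 yk])
  have r1: "(\<Sum>i<N. (cmod (a' i))\<^sup>2) \<le> Kc * (\<Sum>k<N. (cmod (y k))\<^sup>2)"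
    unfolding Kc_def by (rule recover[OF arec])
  have r2: "(\<Sum>k<N. (cmod (y k))\<^sup>2) \<le> (norm z)\<^sup>2"
    unfolding y_def by (rule bessel[OF ON]) simp
  have r3: "Kc * (\<Sum>k<N. (cmod (y k))\<^sup>2) \<le> Kc * (norm z)\<^sup>2" using r2 Kc0 by (rule mult_left_mono)
  have r4: "(\<Sum>i<N. (cmod (a' i))\<^sup>2) = \<alpha>2"
  proof -
    have "(\<Sum>i<N. (cmod (a' i))\<^sup>2) = (\<Sum>i<N. if i \<in> F then (cmod (a i))\<^sup>2 else 0)"
      by (rule sum.cong) (auto simp: a'_def)
    also have "\<dots> = (\<Sum>j\<in>{..<N} \<inter> F. (cmod (a j))\<^sup>2)"
      by (rule sum.inter_restrict[symmetric]) simp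
    also have "{..<N} \<inter> F = F1" by (auto simp: F1_def)
    finally show ?thesis unfolding \<alpha>2_def .
  qed
  have \<alpha>le: "\<alpha>2 \<le> Kc * (norm z)\<^sup>2" using r1 r3 r4 by linarith
  have "norm z2 \<le> norm z + norm z1"
  proof -
    have "z2 = z - z1" using zsplit by simp
    thus ?thesis using norm_triangle_ineq4[of z z1] by simp
  qed
  hence "(norm z2)\<^sup>2 \<le> (norm z + norm z1)\<^sup>2" by (simp add: power_mono)
  also have "\<dots> \<le> 2 * (norm z)\<^sup>2 + 2 * (norm z1)\<^sup>2" by (rule sq_sum_le)
  finally have b1: "\<beta>2 \<le> 2 * (norm z)\<^sup>2 + 2 * (C2 * \<alpha>2)" using z2n z1n by linarith
  have b2: "C2 * \<alpha>2 \<le> C2 * (Kc * (norm z)\<^sup>2)" using \<alpha>le C20 by (rule mult_left_mono)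
  have \<beta>le: "\<beta>2 \<le> 2 * (norm z)\<^sup>2 + 2 * C2 * Kc * (norm z)\<^sup>2"
    using b1 b2 by (simp add: mult.assoc)
  have "\<alpha>2 + \<beta>2 \<le> (Kc + 2 + 2 * C2 * Kc) * (norm z)\<^sup>2"
    using \<alpha>le \<beta>le by (simp add: algebra_simps)
  thus "(\<Sum>j\<in>F. (cmod (a j))\<^sup>2) \<le> (Kc + 2 + 2 * C2 * Kc) * (norm (\<Sum>j\<in>F. a j *\<^sub>C ?u j))\<^sup>2"
    unfolding sumF z_def .
qed

lemma frame_bounds:
  fixes v x :: "nat \<Rightarrow> 'a::complex_inner" and Gi :: "nat \<Rightarrow> nat \<Rightarrow> complex" and f :: 'a
  assumes onb: "orthonormal_basis v"
    and inv2: "\<forall>i<N. \<forall>j<N. (\<Sum>k<N. cinner (v i) (x k) * Gi k j) = (if i = j then 1 else 0)"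
  defines "Kc \<equiv> (\<Sum>i<N. \<Sum>k<N. (cmod (Gi i k))\<^sup>2)"
    and "C2 \<equiv> (\<Sum>j<N. (norm (x j))\<^sup>2)"
    and "q \<equiv> \<lambda>j. (cmod (cinner f (if j < N then x j else v j)))\<^sup>2"
  shows "summable q"
    and "(norm f)\<^sup>2 \<le> (2 * Kc + 2 * Kc * C2 + 2) * suminf q"
    and "suminf q \<le> (2 * C2 + 2) * (norm f)\<^sup>2"
proof -
  have ON: "ON v" using onb by (rule onb_ON)
  have Kc0: "Kc \<ge> 0" and C20: "C2 \<ge> 0" by (simp_all add: Kc_def C2_def sum_nonneg)
  define p where "p k = (cmod (cinner (v k) f))\<^sup>2" for k
  have ps: "p sums (norm f)\<^sup>2" unfolding p_def by (rule parseval[OF onb])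
  have psum: "summable p" using ps by (rule sums_summable)
  have qp: "q (j + N) = p (j + N)" for j
    unfolding q_def p_def by (simp, metis cinner_conj complex_mod_cnj)
  have "summable (\<lambda>j. p (j + N))" using psum by (rule summable_ignore_initial_segment)
  hence "summable (\<lambda>j. q (j + N))" by (simp add: qp)
  thus qsum: "summable q" by (simp only: summable_iff_shift)
  have "suminf q = (\<Sum>j. q (j + N)) + (\<Sum>j<N. q j)" using qsum by (rule suminf_split_initial_segment)
  moreover have "suminf p = (\<Sum>j. p (j + N)) + (\<Sum>j<N. p j)" using psum by (rule suminf_split_initial_segment)
  moreover have "suminf p = (norm f)\<^sup>2" using ps by (rule sums_unique[symmetric])
  moreover have "(\<Sum>j. q (j + N)) = (\<Sum>j. p (j + N))" by (simp add: qp)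
  ultimately have T: "suminf q = (\<Sum>j<N. q j) + ((norm f)\<^sup>2 - (\<Sum>j<N. p j))" by simp
  define T1 where "T1 = (\<Sum>j<N. (cmod (cinner f (x j)))\<^sup>2)"
  have T1q: "(\<Sum>j<N. q j) = T1" unfolding T1_def q_def by (rule sum.cong) auto
  define P where "P = (\<Sum>j<N. p j)"
  define g where "g = proj v {..<N} f"
  define h where "h = f - g"
  define \<eta>2 where "\<eta>2 = (norm f)\<^sup>2 - P"
  have \<eta>h: "\<eta>2 = (norm h)\<^sup>2" unfolding \<eta>2_def h_def g_def P_def p_def
    using norm_resid[OF ON, of "{..<N}" f] by simp
  have \<eta>0: "\<eta>2 \<ge> 0" using \<eta>h by simp
  have P0: "P \<ge> 0" unfolding P_def p_def by (simp add: sum_nonneg)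
  have T': "suminf q = T1 + \<eta>2" using T T1q by (simp add: \<eta>2_def P_def)
  have "T1 \<le> (\<Sum>j<N. (norm f)\<^sup>2 * (norm (x j))\<^sup>2)"
    unfolding T1_def
  proof (rule sum_mono)
    fix j
    have "cmod (cinner f (x j)) \<le> norm f * norm (x j)" by (rule cauchy_schwarz)
    hence "(cmod (cinner f (x j)))\<^sup>2 \<le> (norm f * norm (x j))\<^sup>2" by (simp add: power_mono)
    thus "(cmod (cinner f (x j)))\<^sup>2 \<le> (norm f)\<^sup>2 * (norm (x j))\<^sup>2" by (simp add: power_mult_distrib)
  qed
  also have "\<dots> = (norm f)\<^sup>2 * C2" unfolding C2_def by (simp add: sum_distrib_left)
  finally have T1le: "T1 \<le> (norm f)\<^sup>2 * C2" .
  have "suminf q \<le> (norm f)\<^sup>2 * C2 + (norm f)\<^sup>2" using T' T1le P0 by (simp add: \<eta>2_def)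
  also have "\<dots> \<le> (2 * C2 + 2) * (norm f)\<^sup>2"
    using C20 by (simp add: algebra_simps)
  finally show "suminf q \<le> (2 * C2 + 2) * (norm f)\<^sup>2" .
  define cc where "cc k = cnj (cinner (v k) f)" for k
  define d where "d j = cinner g (x j)" for j
  define e where "e j = cinner h (x j)" for j
  have dform: "\<forall>j<N. d j = (\<Sum>k<N. cc k * cinner (v k) (x j))"
    unfolding d_def g_def proj_def cc_def by (simp add: cinner_sum_left cinner_scaleC_left)
  have ccrec: "\<forall>i<N. cc i = (\<Sum>j<N. Gi j i * d j)"
    by (rule inv_apply2[OF inv2 dform])
  have "(\<Sum>i<N. (cmod (cc i))\<^sup>2) \<le> (\<Sum>i<N. \<Sum>j<N. (cmod (Gi j i))\<^sup>2) * (\<Sum>j<N. (cmod (d j))\<^sup>2)"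
    by (rule recover[OF ccrec])
  also have "(\<Sum>i<N. \<Sum>j<N. (cmod (Gi j i))\<^sup>2) = Kc" unfolding Kc_def by (rule sum.swap)
  finally have PD: "P \<le> Kc * (\<Sum>j<N. (cmod (d j))\<^sup>2)"
    unfolding P_def p_def cc_def by simp
  have fde: "cinner f (x j) = d j + e j" for j
  proof -
    have "f = g + h" by (simp add: h_def)
    hence "cinner f (x j) = cinner (g + h) (x j)" by simp
    thus ?thesis by (simp add: cinner_add_left d_def e_def)
  qed
  have dle: "(cmod (d j))\<^sup>2 \<le> 2 * (cmod (cinner f (x j)))\<^sup>2 + 2 * ((norm h)\<^sup>2 * (norm (x j))\<^sup>2)" for j
  proof -
    have "d j = cinner f (x j) - e j" using fde[of j] by simp
    hence "cmod (d j) \<le> cmod (cinner f (x j)) + cmod (e j)" by (simp add: norm_triangle_ineq4)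
    hence "(cmod (d j))\<^sup>2 \<le> (cmod (cinner f (x j)) + cmod (e j))\<^sup>2" by (simp add: power_mono)
    also have "\<dots> \<le> 2 * (cmod (cinner f (x j)))\<^sup>2 + 2 * (cmod (e j))\<^sup>2" by (rule sq_sum_le)
    also have "(cmod (e j))\<^sup>2 \<le> (norm h)\<^sup>2 * (norm (x j))\<^sup>2"
    proof -
      have "cmod (e j) \<le> norm h * norm (x j)" unfolding e_def by (rule cauchy_schwarz)
      hence "(cmod (e j))\<^sup>2 \<le> (norm h * norm (x j))\<^sup>2" by (simp add: power_mono)
      thus ?thesis by (simp add: power_mult_distrib)
    qed
    hence "2 * (cmod (cinner f (x j)))\<^sup>2 + 2 * (cmod (e j))\<^sup>2 \<le> 2 * (cmod (cinner f (x j)))\<^sup>2 + 2 * ((norm h)\<^sup>2 * (norm (x j))\<^sup>2)"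
      by simp
    finally show ?thesis .
  qed
  have "(\<Sum>j<N. (cmod (d j))\<^sup>2) \<le> (\<Sum>j<N. 2 * (cmod (cinner f (x j)))\<^sup>2 + 2 * ((norm h)\<^sup>2 * (norm (x j))\<^sup>2))"
    by (rule sum_mono) (rule dle)
  also have "\<dots> = 2 * T1 + 2 * \<eta>2 * C2"
    unfolding T1_def C2_def \<eta>h by (simp add: sum.distrib sum_distrib_left mult.assoc)
  finally have Dle: "(\<Sum>j<N. (cmod (d j))\<^sup>2) \<le> 2 * T1 + 2 * \<eta>2 * C2" .
  have "Kc * (\<Sum>j<N. (cmod (d j))\<^sup>2) \<le> Kc * (2 * T1 + 2 * \<eta>2 * C2)" using Dle Kc0 by (rule mult_left_mono)
  hence PP: "P \<le> 2 * Kc * T1 + 2 * Kc * C2 * \<eta>2" using PD by (simp add: algebra_simps)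
  have nf: "(norm f)\<^sup>2 = P + \<eta>2" by (simp add: \<eta>2_def)
  have T10: "T1 \<ge> 0" unfolding T1_def by (simp add: sum_nonneg)
  have KC0: "Kc * C2 \<ge> 0" using Kc0 C20 by simp
  have "(norm f)\<^sup>2 \<le> 2 * Kc * T1 + (2 * Kc * C2 + 1) * \<eta>2" using nf PP by (simp add: algebra_simps)
  also have "\<dots> \<le> (2 * Kc + 2 * Kc * C2 + 2) * (T1 + \<eta>2)"
  proof -
    have a: "2 * Kc * T1 \<le> (2 * Kc + 2 * Kc * C2 + 2) * T1"
      using T10 KC0 by (intro mult_right_mono) simp_all
    have b: "(2 * Kc * C2 + 1) * \<eta>2 \<le> (2 * Kc + 2 * Kc * C2 + 2) * \<eta>2"
      using \<eta>0 Kc0 by (intro mult_right_mono) simp_all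
    show ?thesis using a b by (simp add: distrib_left)
  qed
  finally show "(norm f)\<^sup>2 \<le> (2 * Kc + 2 * Kc * C2 + 2) * suminf q" using T' by simp
qed

lemma inj_riesz:
  fixes v x :: "nat \<Rightarrow> 'a::complex_inner" and Gi :: "nat \<Rightarrow> nat \<Rightarrow> complex"
  assumes onb: "orthonormal_basis v"
    and inv1: "\<forall>i<N. \<forall>j<N. (\<Sum>k<N. Gi i k * cinner (v k) (x j)) = (if i = j then 1 else 0)"
    and inv2: "\<forall>i<N. \<forall>j<N. (\<Sum>k<N. cinner (v i) (x k) * Gi k j) = (if i = j then 1 else 0)"
  shows "riesz_basis (\<lambda>j. if j < N then x j else v j)"
proof -
  have ON: "ON v" using onb by (rule onb_ON)
  define Kc where "Kc = (\<Sum>i<N. \<Sum>k<N. (cmod (Gi i k))\<^sup>2)"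
  define C2 where "C2 = (\<Sum>j<N. (norm (x j))\<^sup>2)"
  have Kc0: "Kc \<ge> 0" and C20: "C2 \<ge> 0" by (simp_all add: Kc_def C2_def sum_nonneg)
  define D where "D = 2 * Kc + 2 * Kc * C2 + 2"
  have KC0: "Kc * C2 \<ge> 0" using Kc0 C20 by simp
  have D2: "D \<ge> 2" using Kc0 KC0 by (simp add: D_def)
  have D1: "Kc + 2 + 2 * C2 * Kc \<le> D" using Kc0 KC0 by (simp add: D_def algebra_simps)
  define A where "A = 1 / D"
  define B where "B = 2 * C2 + 2"
  have Apos: "A > 0" using D2 by (simp add: A_def)
  have AB: "A \<le> B"
  proof -
    have "A \<le> 1/2" using D2 by (simp add: A_def field_simps)
    moreover have "B \<ge> 2" using C20 by (simp add: B_def)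
    ultimately show ?thesis by linarith
  qed
  show ?thesis unfolding riesz_basis_def
  proof (rule exI[of _ A], rule exI[of _ B], intro conjI allI impI)
    show "0 < A" by (rule Apos)
    show "A \<le> B" by (rule AB)
  next
    fix f
    let ?q = "\<lambda>j. (cmod (cinner f (if j < N then x j else v j)))\<^sup>2"
    note fb = frame_bounds[OF onb inv2, where f=f, folded Kc_def C2_def]
    show "summable ?q" by (rule fb(1))
    show "A * (norm f)\<^sup>2 \<le> (\<Sum>j. ?q j)"
      using fb(2) D2 by (simp add: A_def D_def field_simps)
    show "(\<Sum>j. ?q j) \<le> B * (norm f)\<^sup>2" using fb(3) by (simp add: B_def)
  next
    fix F :: "nat set" and a :: "nat \<Rightarrow> complex" assume F: "finite F"
    let ?z = "\<Sum>j\<in>F. a j *\<^sub>C (if j < N then x j else v j)"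
    note sb = synth_bounds[OF ON inv1 F, where a=a, folded Kc_def C2_def]
    have "(\<Sum>j\<in>F. (cmod (a j))\<^sup>2) \<le> D * (norm ?z)\<^sup>2"
      using sb(1) D1 by (meson mult_right_mono order_trans zero_le_power2)
    thus "A * (\<Sum>j\<in>F. (cmod (a j))\<^sup>2) \<le> (norm ?z)\<^sup>2"
      using D2 by (simp add: A_def field_simps)
    show "(norm ?z)\<^sup>2 \<le> B * (\<Sum>j\<in>F. (cmod (a j))\<^sup>2)" using sb(2) by (simp add: B_def)
  qed
qed

theorem mainTheorem4:
  fixes v w :: "nat \<Rightarrow> 'a::chilbert_space" and N :: nat
  assumes "orthonormal_basis v"
    and "\<And>j. norm (w j) = 1"
    and "N \<ge> 1"
  shows "riesz_basis (\<lambda>j. if j < N then w j else v j) \<longleftrightarrow>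
         riesz_basis (\<lambda>j. if j < N then orth_proj (cspan (v ` {..<N})) (w j) else v j)"
proof -
  have ON: "ON v" using assms(1) by (rule onb_ON)
  have char: "riesz_basis (\<lambda>j. if j < N then x j else v j) \<longleftrightarrow>
      (\<forall>a. (\<forall>k<N. (\<Sum>j<N. cinner (v k) (x j) * a j) = 0) \<longrightarrow> (\<forall>j<N. a j = 0))"
    for x :: "nat \<Rightarrow> 'a"
  proof
    assume "riesz_basis (\<lambda>j. if j < N then x j else v j)"
    thus "\<forall>a. (\<forall>k<N. (\<Sum>j<N. cinner (v k) (x j) * a j) = 0) \<longrightarrow> (\<forall>j<N. a j = 0)"
      by (rule riesz_inj[OF assms(1)])
  next
    assume h: "\<forall>a. (\<forall>k<N. (\<Sum>j<N. cinner (v k) (x j) * a j) = 0) \<longrightarrow> (\<forall>j<N. a j = 0)"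
    have "\<exists>Gi. (\<forall>i<N. \<forall>j<N. (\<Sum>k<N. Gi i k * cinner (v k) (x j)) = (if i = j then 1 else 0)) \<and>
              (\<forall>i<N. \<forall>j<N. (\<Sum>k<N. cinner (v i) (x k) * Gi k j) = (if i = j then 1 else 0))"
      by (rule inv_exists) (use h in blast)
    then obtain Gi where
      g1: "\<forall>i<N. \<forall>j<N. (\<Sum>k<N. Gi i k * cinner (v k) (x j)) = (if i = j then 1 else 0)" and
      g2: "\<forall>i<N. \<forall>j<N. (\<Sum>k<N. cinner (v i) (x k) * Gi k j) = (if i = j then 1 else 0)"
      by blast
    show "riesz_basis (\<lambda>j. if j < N then x j else v j)"
      by (rule inj_riesz[OF assms(1) g1 g2])
  qed
  have eqfun: "(\<lambda>j. if j < N then orth_proj (cspan (v ` {..<N})) (w j) else v j) =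
      (\<lambda>j. if j < N then proj v {..<N} (w j) else v j)"
    by (rule ext) (simp only: orth_proj_eq[OF ON])
  have Geq: "cinner (v k) (proj v {..<N} (w j)) = cinner (v k) (w j)" if "k < N" for k j
    unfolding proj_def using cinner_v_comb[OF ON, of "{..<N}" k "\<lambda>k. cinner (v k) (w j)"] that
    by simp
  have sumeq: "(\<Sum>j<N. cinner (v k) (proj v {..<N} (w j)) * a j) = (\<Sum>j<N. cinner (v k) (w j) * a j)"
    if "k < N" for k a
    using Geq[OF that] by simp
  show ?thesis
    unfolding eqfun char[of w] char[of "\<lambda>j. proj v {..<N} (w j)"]
    using sumeq by simp
qed

end
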